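(* Let $p,q$ be positive integers with $\gcd(p,q)=1$, $q$ odd and $2p/q-1\in(-1,1)$. Then \[ \mathcal{O}(2p/q)=\{(-1)^sA\big((4\ell+2p-2s-q)^2/q^2\big):\ s\in\{0,1\},\ \ell\in\mathbb{Z},\ s-p+1\le2\ell\le s-p+q-1\} \] and \[ \mathcal{E}(2p/q)=\{(-1)^sA\big((4\ell-2s-q)^2/q^2\big):\ s\in\{0,1\},\ \ell\in\mathbb{Z},\ s+1\le2\ell\le s+q-1\}. \]
   Context: Nodes: $x_{k,n}:=2k/n-1$, $k=0,\dots,n$; $D_n(x)=\sum_{k=0}^n(-1)^k\frac{1}{x-x_{k,n}}$. $A(y)=\sum_{k=0}^\infty(-1)^k\frac{4k+2}{(2k+1)^2-y}$ for $y\in[0,1)$. A sequence $n_j$ is a strictly increasing map $\mathbb{N}\to\mathbb{N}$, odd (even) if all $n_j$ are odd (even); $x$ is regular for $n_j$ if there is $j_0$ with $x\notin\{x_{0,n_j},\dots,x_{n_j,n_j}\}$ for $j\ge j_0$. For a rational $r$ with $x=r-1\in(-1,1)$, $\mathcal{O}(r)$ is the set of $L\in\overline{\mathbb{R}}=\mathbb{R}\cup\{\pm\infty\}$ such that $\lim_{j\to\infty}D_{n_j}(x)/n_j=L$ for some odd sequence $n_j$ for which $x$ is regular; $\mathcal{E}(r)$ is defined likewise with even sequences. *)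

theory Defs
  imports "HOL-Analysis.Analysis" "HOL-Library.Extended_Real"
begin

definition node :: "nat \<Rightarrow> nat \<Rightarrow> real" where
  "node n k = 2 * real k / real n - 1"

definition Dn :: "nat \<Rightarrow> real \<Rightarrow> real" where
  "Dn n x = (\<Sum>k\<le>n. (-1) ^ k * (1 / (x - node n k)))"

definition A :: "real \<Rightarrow> real" where
  "A y = (\<Sum>k. (-1) ^ k * ((4 * real k + 2) / ((2 * real k + 1)^2 - y)))"

definition regular :: "(nat \<Rightarrow> nat) \<Rightarrow> real \<Rightarrow> bool" where
  "regular n x \<longleftrightarrow> (\<exists>j0. \<forall>j\<ge>j0. x \<notin> {node (n j) k | k. k \<le> n j})"

definition Oset :: "real \<Rightarrow> ereal set" where
  "Oset r = {L. \<exists>n. strict_mono n \<and> (\<forall>j. odd (n j)) \<and> regular n (r - 1) \<and>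
      ((\<lambda>j. ereal (Dn (n j) (r - 1) / real (n j))) \<longlongrightarrow> L) sequentially}"

definition Eset :: "real \<Rightarrow> ereal set" where
  "Eset r = {L. \<exists>n. strict_mono n \<and> (\<forall>j. even (n j)) \<and> regular n (r - 1) \<and>
      ((\<lambda>j. ereal (Dn (n j) (r - 1) / real (n j))) \<longlongrightarrow> L) sequentially}"

end

theory Submission
  imports Defs "HOL-Real_Asymp.Real_Asymp" "HOL-Number_Theory.Cong"
begin

definition Pp :: "real \<Rightarrow> nat \<Rightarrow> real" where
  "Pp c N = (\<Sum>j<N. (-1)^j * (1/(real j + c)))"
definition Pn :: "real \<Rightarrow> nat \<Rightarrow> real" where
  "Pn c N = (\<Sum>j<N. (-1)^j * (1/(real j + 1 - c)))"

lemma summ_p: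
  assumes "0 < c"
  shows "summable (\<lambda>j. (-1)^j * (1/(real j + c)))"
proof (rule summable_Leibniz'(1))
  show "(\<lambda>n. 1 / (real n + c)) \<longlonglongrightarrow> 0" by real_asymp
  show "\<And>n. 0 \<le> 1 / (real n + c)" using assms by simp
  show "\<And>n. 1 / (real (Suc n) + c) \<le> 1 / (real n + c)" using assms
    by (simp add: frac_le)
qed

lemma summ_n:
  assumes "c < 1"
  shows "summable (\<lambda>j. (-1)^j * (1/(real j + 1 - c)))"
proof (rule summable_Leibniz'(1))
  show "(\<lambda>n. 1 / (real n + 1 - c)) \<longlonglongrightarrow> 0" by real_asymp
  show "\<And>n. 0 \<le> 1 / (real n + 1 - c)" using assms by simp
  show "\<And>n. 1 / (real (Suc n) + 1 - c) \<le> 1 / (real n + 1 - c)" using assms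
    by (simp add: frac_le)
qed

lemma A_eq:
  assumes "0 < c" "c < 1"
  shows "A ((2*c-1)^2) = ((\<Sum>j. (-1)^j * (1/(real j + c))) + (\<Sum>j. (-1)^j * (1/(real j + 1 - c)))) / 2"
proof -
  have t: "(-1)^k * ((4 * real k + 2) / ((2 * real k + 1)^2 - (2*c-1)^2))
     = ((-1)^k * (1/(real k + c)) + (-1)^k * (1/(real k + 1 - c))) / 2" for k
  proof -
    define a where "a = real k + c"
    define b where "b = real k + 1 - c"
    have ab: "a > 0" "b > 0" using assms by (auto simp: a_def b_def)
    have e1: "(2 * real k + 1)^2 - (2*c-1)^2 = 4 * a * b"
      by (simp add: a_def b_def power2_eq_square algebra_simps)
    have e2: "4 * real k + 2 = 2 * (a + b)" by (simp add: a_def b_def)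
    have "(-1::real)^k * (2 * (a + b) / (4 * a * b)) = ((-1)^k * (1/a) + (-1)^k * (1/b)) / 2"
      using ab by (simp add: field_simps)
    then show ?thesis unfolding e1 e2 by (simp add: a_def b_def)
  qed
  have "A ((2*c-1)^2) = (\<Sum>k. ((-1)^k * (1/(real k + c)) + (-1)^k * (1/(real k + 1 - c))) / 2)"
    unfolding A_def by (simp only: t)
  also have "\<dots> = (\<Sum>k. ((-1)^k * (1/(real k + c)) + (-1)^k * (1/(real k + 1 - c)))) / 2"
    by (rule suminf_divide[OF summable_add[OF summ_p summ_n]]) (use assms in auto)
  also have "\<dots> = ((\<Sum>j. (-1)^j * (1/(real j + c))) + (\<Sum>j. (-1)^j * (1/(real j + 1 - c)))) / 2"
    by (subst suminf_add[OF summ_p summ_n]) (use assms in auto)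
  finally show ?thesis .
qed

lemma comb_base:
  "(\<Sum>k\<le>m. (-1)^k * (1/(2*(real m + c - real k)))) = (-1)^m / 2 * Pp c (Suc m)"
proof (induction m arbitrary: c)
  case 0
  then show ?case by (simp add: Pp_def)
next
  case (Suc m)
  have "(\<Sum>k\<le>Suc m. (-1)^k * (1/(2*(real (Suc m) + c - real k))))
     = 1/(2*(real (Suc m) + c)) + (\<Sum>k\<le>m. (-1)^(Suc k) * (1/(2*(real (Suc m) + c - real (Suc k)))))"
    by (subst sum.atMost_Suc_shift) simp
  also have "(\<Sum>k\<le>m. (-1)^(Suc k) * (1/(2*(real (Suc m) + c - real (Suc k)))))
     = - (\<Sum>k\<le>m. (-1)^k * (1/(2*(real m + c - real k))))"
    by (auto simp: sum_negf[symmetric] algebra_simps intro!: sum.cong)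
  also have "\<dots> = - ((-1)^m / 2 * Pp c (Suc m))" using Suc by simp
  finally have h: "(\<Sum>k\<le>Suc m. (-1)^k * (1/(2*(real (Suc m) + c - real k)))) = 1/(2*(real (Suc m) + c)) - (-1)^m / 2 * Pp c (Suc m)" by simp
  have pp: "Pp c (Suc (Suc m)) = Pp c (Suc m) - (-1)^m * (1/(real (Suc m) + c))"
    by (simp add: Pp_def)
  have sq: "(-1::real)^m * (-1)^m = 1" by (induct m) auto
  have alg: "(-t)/2*(P - t*x) = (t*t)*x/2 - t/2*P" for t P x :: real
    by (simp add: field_simps)
  have "(-1)^(Suc m) / 2 * Pp c (Suc (Suc m)) = ((-1)^m * (-1)^m) * (1/(real (Suc m) + c))/2 - (-1)^m / 2 * Pp c (Suc m)"
    unfolding pp power_Suc by (subst alg[symmetric]) simp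
  then have "(-1)^(Suc m) / 2 * Pp c (Suc (Suc m)) = 1/(2*(real (Suc m) + c)) - (-1)^m / 2 * Pp c (Suc m)"
    unfolding sq by simp
  then show ?case using h by simp
qed

lemma comb:
  assumes "m \<le> n"
  shows "(\<Sum>k\<le>n. (-1)^k * (1/(2*(real m + c - real k)))) = (-1)^m / 2 * (Pp c (Suc m) + Pn c (n - m))"
  using assms
proof (induction n rule: dec_induct)
  case base
  then show ?case using comb_base[of m c] by (simp add: Pn_def)
next
  case (step n)
  have e: "(-1::real)^m * (-1)^(n-m) = (-1)^n"
    using step(1) by (metis power_add le_add_diff_inverse)
  have "Pn c (Suc n - m) = Pn c (n - m) + (-1)^(n-m) * (1/(real (n-m) + 1 - c))"
    using step(1) by (simp add: Pn_def Suc_diff_le)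
  moreover have "real (n-m) = real n - real m" using step(1) by simp
  ultimately have pn: "Pn c (Suc n - m) = Pn c (n - m) + (-1)^(n-m) * (1/(real n - real m + 1 - c))"
    by simp
  have "(-1)^m / 2 * (Pp c (Suc m) + Pn c (Suc n - m))
      = (-1)^m / 2 * (Pp c (Suc m) + Pn c (n - m)) + (-1)^m * (-1)^(n-m) * (1/(2*(real n - real m + 1 - c)))"
    unfolding pn by (simp add: algebra_simps)
  also have "\<dots> = (-1)^m / 2 * (Pp c (Suc m) + Pn c (n - m)) + (-1)^Suc n * (1/(2*(real m + c - real (Suc n))))"
  proof -
    have "(-1)^Suc n * (1/(2*(real m + c - real (Suc n)))) = (-1)^n * (1/(2*(real n - real m + 1 - c)))"
      by (cases "real n - real m + 1 - c = 0") (simp_all add: field_simps)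
    then show ?thesis using e by simp
  qed
  finally show ?case using step by simp
qed

lemma Dn_formula:
  assumes "q > 0" "n > 0" "p * n = q * m + r" "m \<le> n"
  shows "Dn n (2*real p/real q - 1) / real n
     = (-1)^m / 2 * (Pp (real r/real q) (Suc m) + Pn (real r/real q) (n - m))"
proof -
  have rp: "real p * real n = real q * real m + real r"
    using assms(3) by (metis of_nat_add of_nat_mult)
  have "Dn n (2*real p/real q - 1) / real n
      = (\<Sum>k\<le>n. (-1)^k * (1/(2*(real m + real r/real q - real k))))"
    unfolding Dn_def node_def sum_divide_distrib
  proof (rule sum.cong[OF refl])
    fix k assume "k \<in> {..n}"
    define z where "z = real m + real r/real q - real k"
    have "2*real p/real q - 1 - (2 * real k / real n - 1) = 2 * z / real n"
      using assms(1,2) rp unfolding z_def by (simp add: field_simps)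
    then show "(-1)^k * (1 / (2*real p/real q - 1 - (2 * real k / real n - 1))) / real n
        = (-1)^k * (1/(2*(real m + real r/real q - real k)))"
      using assms(2) unfolding z_def[symmetric]
      by (cases "z = 0") (simp_all add: field_simps)
  qed
  also have "\<dots> = (-1)^m / 2 * (Pp (real r/real q) (Suc m) + Pn (real r/real q) (n - m))" by (rule comb[OF assms(4)])
  finally show ?thesis .
qed

lemma class_lim:
  fixes g M :: "nat \<Rightarrow> nat" and \<sigma> :: real
  assumes q: "p < q" "0 < r" "r < q" "0 < p"
    and g: "filterlim g at_top sequentially"
    and gM: "\<And>j. p * g j = q * M j + r"
    and sig: "\<And>j. (-1::real)^(M j) = \<sigma>"
  shows "(\<lambda>j. Dn (g j) (2*real p/real q - 1) / real (g j)) \<longlonglongrightarrow> \<sigma> * A((2*(real r/real q) - 1)^2)"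
proof -
  define c where "c = real r / real q"
  have c: "0 < c" "c < 1" using q by (auto simp: c_def)
  have Mle: "M j \<le> g j" for j
  proof -
    have "q * M j \<le> p * g j" using gM[of j] by linarith
    also have "\<dots> \<le> q * g j" using q by simp
    finally show ?thesis using q by simp
  qed
  have realeq: "real p * real (g j) = real q * real (M j) + real r" for j
    using gM[of j] by (metis of_nat_add of_nat_mult)
  have Mlim: "filterlim (\<lambda>j. Suc (M j)) at_top sequentially"
    unfolding filterlim_at_top
  proof
    fix Z :: nat
    have "eventually (\<lambda>j. q * Z \<le> g j) sequentially"
      using g unfolding filterlim_at_top by blast
    then show "eventually (\<lambda>j. Z \<le> Suc (M j)) sequentially"
    proof eventually_elim
      case (elim j)
      have "real q * real Z \<le> real (g j)" using elim by (metis of_nat_le_iff of_nat_mult)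
      also have "\<dots> \<le> real p * real (g j)" using q by (simp add: mult_le_cancel_right1)
      also have "\<dots> < real q * (real (M j) + 1)" using realeq[of j] q by (simp add: algebra_simps)
      finally have "real Z < real (M j) + 1" using q by (simp add: mult_less_cancel_left_pos)
      then show ?case by linarith
    qed
  qed
  have Nlim: "filterlim (\<lambda>j. g j - M j) at_top sequentially"
    unfolding filterlim_at_top
  proof
    fix Z :: nat
    have "eventually (\<lambda>j. q * Z \<le> g j) sequentially"
      using g unfolding filterlim_at_top by blast
    then show "eventually (\<lambda>j. Z \<le> g j - M j) sequentially"
    proof eventually_elim
      case (elim j)
      have "real q * real Z \<le> real (g j)" using elim by (metis of_nat_le_iff of_nat_mult)
      also have "\<dots> \<le> (real q - real p) * real (g j)"
        using mult_right_mono[of "real p + 1" "real q" "real (g j)"] q by (simp add: algebra_simps)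
      also have "\<dots> \<le> real q * (real (g j) - real (M j))" using realeq[of j] q by (simp add: algebra_simps)
      finally have "real Z \<le> real (g j) - real (M j)" using q by (simp add: mult_le_cancel_left_pos)
      then show ?case using Mle[of j] by linarith
    qed
  qed
  have gpos: "eventually (\<lambda>j. 0 < g j) sequentially"
  proof -
    have "eventually (\<lambda>j. 1 \<le> g j) sequentially" using g unfolding filterlim_at_top by blast
    then show ?thesis by (rule eventually_mono) auto
  qed
  have P1: "(\<lambda>j. Pp c (Suc (M j))) \<longlonglongrightarrow> (\<Sum>j. (-1)^j * (1/(real j + c)))"
    using filterlim_compose[OF summable_LIMSEQ[OF summ_p[OF c(1)]] Mlim] unfolding Pp_def by simp
  have P2: "(\<lambda>j. Pn c (g j - M j)) \<longlonglongrightarrow> (\<Sum>j. (-1)^j * (1/(real j + 1 - c)))"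
    using filterlim_compose[OF summable_LIMSEQ[OF summ_n[OF c(2)]] Nlim] unfolding Pn_def by simp
  have "(\<lambda>j. \<sigma> / 2 * (Pp c (Suc (M j)) + Pn c (g j - M j))) \<longlonglongrightarrow>
      \<sigma> / 2 * ((\<Sum>j. (-1)^j * (1/(real j + c))) + (\<Sum>j. (-1)^j * (1/(real j + 1 - c))))"
    by (intro tendsto_intros P1 P2)
  also have "\<sigma> / 2 * ((\<Sum>j. (-1)^j * (1/(real j + c))) + (\<Sum>j. (-1)^j * (1/(real j + 1 - c))))
      = \<sigma> * A((2*(real r/real q) - 1)^2)"
    using A_eq[OF c] unfolding c_def by simp
  finally show ?thesis
  proof (rule Lim_transform_eventually)
    show "eventually (\<lambda>j. \<sigma> / 2 * (Pp c (Suc (M j)) + Pn c (g j - M j))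
        = Dn (g j) (2*real p/real q - 1) / real (g j)) sequentially"
      using gpos
    proof eventually_elim
      case (elim j)
      show ?case using Dn_formula[OF _ elim gM[of j] Mle[of j]] q sig[of j]
        unfolding c_def by simp
    qed
  qed
qed


lemma not_node:
  assumes "q > 0" "coprime p q" "\<not> q dvd n"
  shows "2*real p/real q - 1 \<notin> {node n k | k. k \<le> n}"
proof
  assume "2*real p/real q - 1 \<in> {node n k | k. k \<le> n}"
  then obtain k where k: "2*real p/real q - 1 = 2 * real k / real n - 1"
    unfolding node_def by auto
  have "n > 0" using assms(3) by (cases n) auto
  then have "real p * real n = real k * real q" using k assms(1) by (simp add: field_simps)
  then have "p * n = k * q" by (metis of_nat_eq_iff of_nat_mult)
  then have "q dvd p * n" by simp
  then have "q dvd n" using assms(2) by (simp add: coprime_dvd_mult_right_iff coprime_commute)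
  then show False using assms(3) by simp
qed

lemma node_dvd:
  assumes "q > 0" "p < q" "q dvd n" "n > 0"
  shows "2*real p/real q - 1 \<in> {node n k | k. k \<le> n}"
proof -
  obtain t where t: "n = q * t" using assms(3) by auto
  have "p * t \<le> n" using t assms(2) by simp
  moreover have "node n (p * t) = 2*real p/real q - 1"
    using t assms(1,4) unfolding node_def by (simp add: field_simps)
  ultimately show ?thesis by force
qed

lemma parity_M:
  assumes "odd q" "p * n = q * M + r"
  shows "even M \<longleftrightarrow> even (p * n + r)"
  using assms by auto

lemma exists_n:
  fixes p q r :: nat
  assumes "coprime p q" "odd q" "r < q"
  shows "\<exists>n>0. p * n mod q = r \<and> (odd n \<longleftrightarrow> b)"
proof -
  obtain x where x: "[p * x = Suc 0] (mod q)" using cong_solve_coprime_nat[OF assms(1)] by blast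
  have "[p * (x * r) = r] (mod q)"
    using cong_mult[OF x cong_refl[of r]] by (simp add: mult.assoc)
  then have h: "p * (x * r) mod q = r" using assms(3) by (simp add: cong_def)
  have m: "p * (x * r + q * t) mod q = r" for t
  proof -
    have "p * (x * r + q * t) = p * (x * r) + (p * t) * q" by (simp add: algebra_simps)
    then show ?thesis using h by simp
  qed
  show ?thesis
  proof (cases "odd (x * r + q) \<longleftrightarrow> b")
    case True
    then show ?thesis using m[of 1] using assms(2) by (intro exI[of _ "x*r + q*1"]) auto
  next
    case False
    then have "odd (x * r + q * 2) \<longleftrightarrow> b" using assms(2) by auto
    then show ?thesis using m[of 2] assms(2) by (intro exI[of _ "x*r + q*2"]) auto
  qed
qed


lemma sign_lemma:
  assumes "odd q" "odd n = b"
  shows "(-1::real)^(p * n div q) = (if even (p * n mod q + (if b then p else 0)) then 1 else -1)"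
proof -
  have "p * n = q * (p * n div q) + p * n mod q" by simp
  from parity_M[OF assms(1) this] have "even (p * n div q) \<longleftrightarrow> even (p * n + p * n mod q)" .
  also have "\<dots> \<longleftrightarrow> even (p * n mod q + (if b then p else 0))" using assms(2) by auto
  finally show ?thesis by (simp add: minus_one_power_iff)
qed

lemma main_gen:
  assumes pq: "0 < p" "p < q" "coprime p q" "odd q"
  shows "{L. \<exists>n. strict_mono n \<and> (\<forall>j. odd (n j) = b) \<and> regular n (2*real p/real q - 1) \<and>
      ((\<lambda>j. ereal (Dn (n j) (2*real p/real q - 1) / real (n j))) \<longlongrightarrow> L) sequentially}
   = {ereal ((if even (r + (if b then p else 0)) then 1 else -1) * A((2*(real r/real q) - 1)^2)) | r. 0 < r \<and> r < q}"
  (is "?L = ?R")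
proof
  show "?L \<subseteq> ?R"
  proof
    fix L assume "L \<in> ?L"
    then obtain n where sm: "strict_mono n" and par: "\<forall>j. odd (n j) = b"
      and reg: "regular n (2*real p/real q - 1)"
      and lim: "((\<lambda>j. ereal (Dn (n j) (2*real p/real q - 1) / real (n j))) \<longlongrightarrow> L) sequentially"
      by blast
    obtain j0 where j0: "\<And>j. j \<ge> j0 \<Longrightarrow> 2*real p/real q - 1 \<notin> {node (n j) k | k. k \<le> n j}"
      using reg unfolding regular_def by blast
    define J where "J = {j. j \<ge> Suc j0}"
    have Jprop: "0 < r" if "j \<in> J" "r = p * n j mod q" for j r
    proof -
      have "j \<le> n j" using seq_suble[OF sm] by simp
      then have "n j > 0" using that(1) unfolding J_def by simp
      then have "\<not> q dvd n j" using node_dvd[of q p "n j"] j0[of j] pq that(1) unfolding J_def by auto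
      then have "\<not> q dvd p * n j" using pq by (simp add: coprime_dvd_mult_right_iff coprime_commute)
      then show ?thesis using that(2) by (simp add: dvd_eq_mod_eq_0)
    qed
    have "infinite J" unfolding J_def infinite_nat_iff_unbounded_le by (metis max.cobounded1 max.cobounded2 mem_Collect_eq)
    moreover have "finite ((\<lambda>j. p * n j mod q) ` J)"
      by (rule finite_subset[of _ "{..<q}"]) (use pq in auto)
    ultimately obtain j1 where "j1 \<in> J" and inf: "infinite {j \<in> J. p * n j mod q = p * n j1 mod q}"
      using pigeonhole_infinite by blast
    define r where "r = p * n j1 mod q"
    define JJ where "JJ = {j \<in> J. p * n j mod q = r}"
    have infJJ: "infinite JJ" using inf unfolding JJ_def r_def by simp
    define sub where "sub = enumerate JJ"
    have smsub: "strict_mono sub" unfolding sub_def using strict_mono_enumerate[OF infJJ] .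
    have inJJ: "sub k \<in> JJ" for k unfolding sub_def using enumerate_in_set[OF infJJ] .
    define g where "g = n \<circ> sub"
    have smg: "strict_mono g" unfolding g_def using strict_mono_o[OF sm smsub] .
    have r: "0 < r" "r < q" using Jprop[OF \<open>j1 \<in> J\<close> r_def] pq by (auto simp: r_def)
    define \<sigma> :: real where "\<sigma> = (if even (r + (if b then p else 0)) then 1 else -1)"
    have gr: "p * g k mod q = r" for k using inJJ[of k] unfolding JJ_def g_def by simp
    have cl: "(\<lambda>k. Dn (g k) (2*real p/real q - 1) / real (g k)) \<longlonglongrightarrow> \<sigma> * A((2*(real r/real q) - 1)^2)"
    proof (rule class_lim[where M = "\<lambda>k. p * g k div q"])
      show "filterlim g at_top sequentially" using filterlim_subseq[OF smg] by simp
      show "p * g j = q * (p * g j div q) + r" for j using gr[of j] by (metis div_mult_mod_eq mult.commute)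
      show "(-1::real)^(p * g j div q) = \<sigma>" for j
        using sign_lemma[OF pq(4) par[rule_format, of "sub j"]] gr[of j] unfolding \<sigma>_def g_def by simp
    qed (use pq r in auto)
    have "((\<lambda>j. ereal (Dn (n j) (2*real p/real q - 1) / real (n j))) \<circ> sub) \<longlonglongrightarrow> L"
      by (rule LIMSEQ_subseq_LIMSEQ[OF lim smsub])
    moreover have "((\<lambda>j. ereal (Dn (n j) (2*real p/real q - 1) / real (n j))) \<circ> sub) \<longlonglongrightarrow> ereal (\<sigma> * A((2*(real r/real q) - 1)^2))"
      using cl unfolding g_def comp_def by simp
    ultimately have "L = ereal (\<sigma> * A((2*(real r/real q) - 1)^2))" using LIMSEQ_unique by blast
    then show "L \<in> ?R" using r unfolding \<sigma>_def by blast
  qed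
next
  show "?R \<subseteq> ?L"
  proof
    fix L assume "L \<in> ?R"
    then obtain r where r: "0 < r" "r < q"
      and L: "L = ereal ((if even (r + (if b then p else 0)) then 1 else -1) * A((2*(real r/real q) - 1)^2))"
      by blast
    obtain n0 where n0: "n0 > 0" "p * n0 mod q = r" "odd n0 \<longleftrightarrow> b"
      using exists_n[OF pq(3,4) r(2)] by blast
    define g where "g j = n0 + 2 * q * j" for j
    have smg: "strict_mono g" unfolding g_def strict_mono_def using pq by simp
    have gr: "p * g j mod q = r" for j
    proof -
      have "p * g j = p * n0 + (2 * p * j) * q" unfolding g_def by (simp add: algebra_simps)
      then show ?thesis using n0 by simp
    qed
    have gpar: "odd (g j) = b" for j unfolding g_def using n0(3) by simp
    have ndvd: "\<not> q dvd g j" for j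
    proof
      assume "q dvd g j"
      then have "p * g j mod q = 0" by simp
      then show False using gr[of j] r by simp
    qed
    have reg: "regular g (2*real p/real q - 1)"
      unfolding regular_def using not_node[OF _ pq(3) ndvd] pq by auto
    define \<sigma> :: real where "\<sigma> = (if even (r + (if b then p else 0)) then 1 else -1)"
    have cl: "(\<lambda>k. Dn (g k) (2*real p/real q - 1) / real (g k)) \<longlonglongrightarrow> \<sigma> * A((2*(real r/real q) - 1)^2)"
    proof (rule class_lim[where M = "\<lambda>k. p * g k div q"])
      show "filterlim g at_top sequentially" using filterlim_subseq[OF smg] by simp
      show "p * g j = q * (p * g j div q) + r" for j using gr[of j] by (metis div_mult_mod_eq mult.commute)
      show "(-1::real)^(p * g j div q) = \<sigma>" for j
        using sign_lemma[OF pq(4) gpar[of j]] gr[of j] unfolding \<sigma>_def by simp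
    qed (use pq r in auto)
    then have "((\<lambda>j. ereal (Dn (g j) (2*real p/real q - 1) / real (g j))) \<longlongrightarrow> L) sequentially"
      unfolding L \<sigma>_def by simp
    then show "L \<in> ?L" using smg gpar reg by blast
  qed
qed


lemma sqeq:
  assumes "q > 0"
  shows "(of_int (2 * int r - int q))^2 / (real q)^2 = (2*(real r/real q) - 1)^2"
proof -
  have "2*(real r/real q) - 1 = (2 * real r - real q) / real q" using assms by (simp add: field_simps)
  then show ?thesis by (simp add: power_divide)
qed

lemma set_match:
  fixes a q :: nat
  assumes "q > 0"
  shows "{ereal ((if even (r + a) then 1 else -1) * A((2*(real r/real q) - 1)^2)) | r. 0 < r \<and> r < q}
    = {ereal ((-1) ^ s * A ((of_int (4 * l + 2 * int a - 2 * int s - int q))^2 / (real q)^2)) | s l.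
         s \<in> {0, 1} \<and> int s - int a + 1 \<le> 2 * l \<and> 2 * l \<le> int s - int a + int q - 1}"
  (is "?L = ?R")
proof
  show "?L \<subseteq> ?R"
  proof
    fix L assume "L \<in> ?L"
    then obtain r where r: "0 < r" "r < q"
      and L: "L = ereal ((if even (r + a) then 1 else -1) * A((2*(real r/real q) - 1)^2))" by blast
    define s :: nat where "s = (if even (r + a) then 0 else 1)"
    define l :: int where "l = (int r + int s - int a) div 2"
    have ev: "even (int r + int s - int a)" unfolding s_def by auto
    then have l2: "2 * l = int r + int s - int a" unfolding l_def by simp
    have e: "4 * l + 2 * int a - 2 * int s - int q = 2 * int r - int q" using l2 by linarith
    have "L = ereal ((-1) ^ s * A ((of_int (4 * l + 2 * int a - 2 * int s - int q))^2 / (real q)^2))"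
      unfolding L by (simp only: e sqeq[OF assms]) (simp add: s_def)
    moreover have "s \<in> {0, 1} \<and> int s - int a + 1 \<le> 2 * l \<and> 2 * l \<le> int s - int a + int q - 1"
      using l2 r unfolding s_def by auto
    ultimately show "L \<in> ?R" by blast
  qed
next
  show "?R \<subseteq> ?L"
  proof
    fix L assume "L \<in> ?R"
    then obtain s l where s: "s \<in> {0::nat, 1}" and b1: "int s - int a + 1 \<le> 2 * l"
      and b2: "2 * l \<le> int s - int a + int q - 1"
      and L: "L = ereal ((-1) ^ s * A ((of_int (4 * l + 2 * int a - 2 * int s - int q))^2 / (real q)^2))"
      by blast
    define r where "r = nat (2 * l + int a - int s)"
    have ri: "int r = 2 * l + int a - int s" unfolding r_def using b1 by simp
    have r: "0 < r" "r < q" using ri b1 b2 by linarith+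
    have e: "4 * l + 2 * int a - 2 * int s - int q = 2 * int r - int q" using ri by linarith
    have sg: "(-1::real) ^ s = (if even (r + a) then 1 else -1)"
    proof -
      have "int (r + a) = 2 * (l + int a) - int s" using ri by simp
      then have "even (r + a) \<longleftrightarrow> even s" by presburger
      then show ?thesis using s by auto
    qed
    have "L = ereal ((if even (r + a) then 1 else -1) * A((2*(real r/real q) - 1)^2))"
      unfolding L by (simp only: e sqeq[OF assms] sg)
    then show "L \<in> ?L" using r by blast
  qed
qed

theorem corollary4:
  fixes p q :: nat
  assumes "p > 0" and "q > 0" and "coprime p q" and "odd q"
    and "-1 < 2 * real p / real q - 1" and "2 * real p / real q - 1 < 1"
  shows "Oset (2 * real p / real q) =
      {ereal ((-1) ^ s * A ((of_int (4 * l + 2 * int p - 2 * int s - int q))^2 / (real q)^2)) | s l.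
         s \<in> {0, 1} \<and> int s - int p + 1 \<le> 2 * l \<and> 2 * l \<le> int s - int p + int q - 1}
    \<and> Eset (2 * real p / real q) =
      {ereal ((-1) ^ s * A ((of_int (4 * l - 2 * int s - int q))^2 / (real q)^2)) | s l.
         s \<in> {0, 1} \<and> int s + 1 \<le> 2 * l \<and> 2 * l \<le> int s + int q - 1}"
proof -
  have pq: "p < q" using assms(2,6) by (simp add: field_simps)
  have O: "Oset (2 * real p / real q) = {ereal ((if even (r + p) then 1 else -1) * A((2*(real r/real q) - 1)^2)) | r. 0 < r \<and> r < q}"
    unfolding Oset_def using main_gen[OF assms(1) pq assms(3,4), of True] by simp
  have E: "Eset (2 * real p / real q) = {ereal ((if even (r + 0) then 1 else -1) * A((2*(real r/real q) - 1)^2)) | r. 0 < r \<and> r < q}"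
    unfolding Eset_def using main_gen[OF assms(1) pq assms(3,4), of False] by simp
  show ?thesis
    unfolding O E set_match[OF assms(2), of p] set_match[OF assms(2), of 0] by simp
qed

end
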